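(* Let $G$ be a co-bipartite graph whose vertex set is partitioned into cliques $A$ and $B$ with $|A|=n_1$ and $|B|=n_2$. Suppose there is a numbering of the vertices, $A=\{1,\dots,n_1\}$ and $B=\{1',\dots,n_2'\}$, which satisfies the Bi-Consecutive Adjacency Property. Then $G$ is a circular arc graph.
   Context: A circular arc graph is the intersection graph of a finite family of arcs of a circle. Bi-Consecutive Adjacency Property: given a partition $V(G)=A\cup B$ with vertices of $A$ numbered $1,\dots,n_1$ and vertices of $B$ numbered $1',\dots,n_2'$, the numbering satisfies the property if for every $i\in A$ and $j'\in B$ with $i$ adjacent to $j'$, either (a) $j'$ is adjacent to every $k\in A$ with $1\le k\le i$, or (b) $i$ is adjacent to every $k'\in B$ with $1'\le k'\le j'$. *)

theory Defs
  imports Complex_Main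
begin

definition simple_graph :: "'v set \<Rightarrow> ('v \<Rightarrow> 'v \<Rightarrow> bool) \<Rightarrow> bool" where
  "simple_graph V E \<longleftrightarrow> finite V \<and>
     (\<forall>u v. E u v \<longrightarrow> u \<in> V \<and> v \<in> V \<and> u \<noteq> v) \<and>
     (\<forall>u v. E u v \<longrightarrow> E v u)"

definition clique :: "('v \<Rightarrow> 'v \<Rightarrow> bool) \<Rightarrow> 'v set \<Rightarrow> bool" where
  "clique E S \<longleftrightarrow> (\<forall>u\<in>S. \<forall>v\<in>S. u \<noteq> v \<longrightarrow> E u v)"

definition cobipartite_partition ::
  "'v set \<Rightarrow> ('v \<Rightarrow> 'v \<Rightarrow> bool) \<Rightarrow> 'v set \<Rightarrow> 'v set \<Rightarrow> bool" where
  "cobipartite_partition V E A B \<longleftrightarrow>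
     V = A \<union> B \<and> A \<inter> B = {} \<and> clique E A \<and> clique E B"

definition arc :: "real \<Rightarrow> real \<Rightarrow> complex set" where
  "arc s l = {cis t | t. s \<le> t \<and> t \<le> s + l}"

definition is_arc :: "complex set \<Rightarrow> bool" where
  "is_arc X \<longleftrightarrow> (\<exists>s l. 0 \<le> l \<and> l < 2 * pi \<and> X = arc s l)"

definition circular_arc_graph :: "'v set \<Rightarrow> ('v \<Rightarrow> 'v \<Rightarrow> bool) \<Rightarrow> bool" where
  "circular_arc_graph V E \<longleftrightarrow>
     (\<exists>f :: 'v \<Rightarrow> complex set. (\<forall>v\<in>V. is_arc (f v)) \<and>
        (\<forall>u\<in>V. \<forall>v\<in>V. u \<noteq> v \<longrightarrow> (E u v \<longleftrightarrow> f u \<inter> f v \<noteq> {})))"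

text \<open>Bi-Consecutive Adjacency Property for numberings \<alpha> : {1..n1} \<rightarrow> A (vertex i),
  \<beta> : {1..n2} \<rightarrow> B (vertex j').\<close>
definition bi_consecutive_adjacency ::
  "('v \<Rightarrow> 'v \<Rightarrow> bool) \<Rightarrow> nat \<Rightarrow> (nat \<Rightarrow> 'v) \<Rightarrow> nat \<Rightarrow> (nat \<Rightarrow> 'v) \<Rightarrow> bool" where
  "bi_consecutive_adjacency E n1 \<alpha> n2 \<beta> \<longleftrightarrow>
     (\<forall>i\<in>{1..n1}. \<forall>j\<in>{1..n2}. E (\<alpha> i) (\<beta> j) \<longrightarrow>
        (\<forall>k\<in>{1..i}. E (\<beta> j) (\<alpha> k)) \<or> (\<forall>k\<in>{1..j}. E (\<alpha> i) (\<beta> k)))"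

end

theory Submission imports Defs begin

lemma cis_eqD: assumes "cis a = cis b" shows "\<exists>n::int. a = b + 2*pi*n"
proof -
  have "sin a = sin b \<and> cos a = cos b" using assms
    by (metis cis.sel(1) cis.sel(2))
  thus ?thesis using sin_cos_eq_iff by blast
qed

lemma arc_meet:
  assumes "0<p" "0<y" "x<pi" "q<2*pi" "0\<le>x" "y\<le>q" "p\<le>2*pi"
  shows "arc p (2*pi+x-p) \<inter> arc y (q-y) \<noteq> {} \<longleftrightarrow> p \<le> q \<or> y \<le> x"
proof
  assume "arc p (2*pi+x-p) \<inter> arc y (q-y) \<noteq> {}"
  then obtain t t' where t: "p \<le> t" "t \<le> 2*pi+x" and t': "y \<le> t'" "t' \<le> q" and e: "cis t = cis t'"
    unfolding arc_def by auto
  obtain n::int where n: "t = t' + 2*pi*n" using cis_eqD[OF e] by blast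
  have "2*pi*n > -2*pi" using n t t' assms by linarith
  hence "pi * (2*real_of_int n) > pi * (-2)" by (simp add: algebra_simps)
  hence "2*real_of_int n > -2" by (metis mult_less_cancel_left_pos pi_gt_zero)
  hence "real_of_int n > -1" by simp
  hence n0: "n \<ge> 0" by linarith
  have "2*pi*n < 4*pi" using n t t' assms by linarith
  hence "pi * (2*real_of_int n) < pi * 4" by (simp add: algebra_simps)
  hence "2*real_of_int n < 4" by (metis mult_less_cancel_left_pos pi_gt_zero)
  hence "real_of_int n < 2" by simp
  hence "n \<le> 1" by linarith
  with n0 have "n = 0 \<or> n = 1" by linarith
  thus "p \<le> q \<or> y \<le> x"
  proof
    assume "n = 0" thus ?thesis using n t t' by simp
  next
    assume "n = 1" thus ?thesis using n t t' by simp
  qed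
next
  assume "p \<le> q \<or> y \<le> x"
  thus "arc p (2*pi+x-p) \<inter> arc y (q-y) \<noteq> {}"
  proof
    assume h: "p \<le> q"
    have "cis (max p y) \<in> arc p (2*pi+x-p)" unfolding arc_def using h assms
      by (intro CollectI exI[of _ "max p y"]) auto
    moreover have "cis (max p y) \<in> arc y (q-y)" unfolding arc_def using h assms
      by (intro CollectI exI[of _ "max p y"]) auto
    ultimately show ?thesis by blast
  next
    assume h: "y \<le> x"
    have "cis (y + 2*pi) \<in> arc p (2*pi+x-p)" unfolding arc_def using h assms
      by (intro CollectI exI[of _ "y+2*pi"]) auto
    moreover have "cis (y+2*pi) = cis y" by (simp add: cis_mult[symmetric])
    moreover have "cis y \<in> arc y (q-y)" unfolding arc_def using h assms
      by (intro CollectI exI[of _ "y"]) auto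
    ultimately show ?thesis by (metis IntI empty_iff)
  qed
qed

lemma ineq1: "(pi*real j/(real n+1) \<le> pi*(real a+1/2)/(real n+1)) \<longleftrightarrow> j \<le> a"
proof -
  have d: "real n + 1 > 0" by simp
  have "(pi*real j/(real n+1) \<le> pi*(real a+1/2)/(real n+1)) \<longleftrightarrow> pi*real j \<le> pi*(real a+1/2)"
    using d by (simp add: divide_le_cancel)
  also have "\<dots> \<longleftrightarrow> real j \<le> real a + 1/2" using pi_gt_zero by (simp add: mult_le_cancel_left_pos)
  also have "\<dots> \<longleftrightarrow> j \<le> a" by linarith
  finally show ?thesis .
qed

lemma ineq2: "(pi + pi*real i/(real n+1) \<le> pi + pi*(real b+1/2)/(real n+1)) \<longleftrightarrow> i \<le> b"
  using ineq1 by simp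

lemma lt1: assumes "a \<le> n" shows "pi*(real a+1/2)/(real n+1) < pi"
proof -
  have "(real a+1/2)/(real n+1) < 1" using assms by (simp add: field_simps)
  hence "pi*((real a+1/2)/(real n+1)) < pi*1" by (intro mult_strict_left_mono pi_gt_zero)
  thus ?thesis by simp
qed

lemma le1: assumes "a \<le> n" shows "pi*real a/(real n+1) \<le> pi"
proof -
  have "real a/(real n+1) \<le> 1" using assms by (simp add: field_simps)
  hence "pi*(real a/(real n+1)) \<le> pi*1" by (intro mult_left_mono) auto
  thus ?thesis by simp
qed
theorem lemma3:
  fixes V A B :: "'v set" and E :: "'v \<Rightarrow> 'v \<Rightarrow> bool"
    and n1 n2 :: nat and \<alpha> \<beta> :: "nat \<Rightarrow> 'v"
  assumes "simple_graph V E"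
    and "cobipartite_partition V E A B"
    and "bij_betw \<alpha> {1..n1} A"
    and "bij_betw \<beta> {1..n2} B"
    and "bi_consecutive_adjacency E n1 \<alpha> n2 \<beta>"
  shows "circular_arc_graph V E"
proof -
  have sym: "\<And>u v. E u v \<Longrightarrow> E v u" using assms(1) unfolding simple_graph_def by blast
  have VAB: "V = A \<union> B" and disj: "A \<inter> B = {}" and cA: "clique E A" and cB: "clique E B"
    using assms(2) unfolding cobipartite_partition_def by auto
  have bca: "\<And>i j. i\<in>{1..n1} \<Longrightarrow> j\<in>{1..n2} \<Longrightarrow> E (\<alpha> i) (\<beta> j) \<Longrightarrow>
        (\<forall>k\<in>{1..i}. E (\<beta> j) (\<alpha> k)) \<or> (\<forall>k\<in>{1..j}. E (\<alpha> i) (\<beta> k))"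
    using assms(5) unfolding bi_consecutive_adjacency_def by blast
  define S where "S i = {j \<in> {0..n2}. \<forall>k\<in>{1..j}. E (\<alpha> i) (\<beta> k)}" for i
  define T where "T j = {i \<in> {0..n1}. \<forall>k\<in>{1..i}. E (\<beta> j) (\<alpha> k)}" for j
  define a where "a i = Max (S i)" for i
  define b where "b j = Max (T j)" for j
  have Sfin: "finite (S i)" "0 \<in> S i" for i unfolding S_def by auto
  have Tfin: "finite (T j)" "0 \<in> T j" for j unfolding T_def by auto
  have aS: "a i \<in> S i" for i unfolding a_def using Sfin by (intro Max_in) auto
  have bT: "b j \<in> T j" for j unfolding b_def using Tfin by (intro Max_in) auto
  have an: "a i \<le> n2" for i using aS[of i] unfolding S_def by auto
  have bn: "b j \<le> n1" for j using bT[of j] unfolding T_def by auto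
  have adj: "E (\<alpha> i) (\<beta> j) \<longleftrightarrow> j \<le> a i \<or> i \<le> b j"
    if i: "i\<in>{1..n1}" and j: "j\<in>{1..n2}" for i j
  proof
    assume e: "E (\<alpha> i) (\<beta> j)"
    from bca[OF i j e] show "j \<le> a i \<or> i \<le> b j"
    proof
      assume "\<forall>k\<in>{1..i}. E (\<beta> j) (\<alpha> k)"
      hence "i \<in> T j" using i unfolding T_def by auto
      hence "i \<le> b j" unfolding b_def using Tfin by (intro Max_ge) auto
      thus ?thesis by simp
    next
      assume "\<forall>k\<in>{1..j}. E (\<alpha> i) (\<beta> k)"
      hence "j \<in> S i" using j unfolding S_def by auto
      hence "j \<le> a i" unfolding a_def using Sfin by (intro Max_ge) auto
      thus ?thesis by simp
    qed
  next
    assume "j \<le> a i \<or> i \<le> b j"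
    thus "E (\<alpha> i) (\<beta> j)"
    proof
      assume "j \<le> a i"
      thus ?thesis using aS[of i] j unfolding S_def by auto
    next
      assume "i \<le> b j"
      hence "E (\<beta> j) (\<alpha> i)" using bT[of j] i unfolding T_def by auto
      thus ?thesis by (rule sym)
    qed
  qed
  define xA where "xA i = pi*(real (a i)+1/2)/(real n2+1)" for i
  define pA where "pA i = pi + pi*real i/(real n1+1)" for i
  define yB where "yB j = pi*real j/(real n2+1)" for j
  define qB where "qB j = pi + pi*(real (b j)+1/2)/(real n1+1)" for j
  define fa where "fa i = arc (pA i) (2*pi + xA i - pA i)" for i
  define fb where "fb j = arc (yB j) (qB j - yB j)" for j
  have xA0: "0 \<le> xA i" for i unfolding xA_def by simp
  have xApi: "xA i < pi" for i unfolding xA_def using lt1[OF an[of i]] .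
  have pApi: "pi \<le> pA i" for i unfolding pA_def by simp
  have pA2: "pA i \<le> 2*pi" if "i \<le> n1" for i unfolding pA_def using le1[OF that] by simp
  have yB0: "0 < yB j" if "1 \<le> j" for j unfolding yB_def using that by (simp add: pi_gt_zero)
  have yBpi: "yB j \<le> pi" if "j \<le> n2" for j unfolding yB_def using le1[OF that] .
  have qBpi: "pi < qB j" for j unfolding qB_def by (simp add: pi_gt_zero)
  have qB2: "qB j < 2*pi" for j unfolding qB_def using lt1[OF bn[of j]] by simp
  have ycmp: "yB j \<le> xA i \<longleftrightarrow> j \<le> a i" for i j unfolding yB_def xA_def by (rule ineq1)
  have pcmp: "pA i \<le> qB j \<longleftrightarrow> i \<le> b j" for i j unfolding pA_def qB_def by (rule ineq2)
  have meet: "fa i \<inter> fb j \<noteq> {} \<longleftrightarrow> E (\<alpha> i) (\<beta> j)"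
    if i: "i\<in>{1..n1}" and j: "j\<in>{1..n2}" for i j
  proof -
    have "fa i \<inter> fb j \<noteq> {} \<longleftrightarrow> pA i \<le> qB j \<or> yB j \<le> xA i"
      unfolding fa_def fb_def
      apply (rule arc_meet)
      using i j pApi[of i] pA2[of i] yB0[of j] xApi[of i] qB2[of j] xA0[of i] yBpi[of j] qBpi[of j]
        pi_gt_zero by auto
    also have "\<dots> \<longleftrightarrow> E (\<alpha> i) (\<beta> j)" using adj[OF i j] pcmp ycmp by auto
    finally show ?thesis .
  qed
  have arcA: "is_arc (fa i)" if "i \<in> {1..n1}" for i
    unfolding is_arc_def fa_def using pA2[of i] that xA0[of i] xApi[of i] pApi[of i]
    by (intro exI[of _ "pA i"] exI[of _ "2*pi + xA i - pA i"]) auto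
  have arcB: "is_arc (fb j)" if "j \<in> {1..n2}" for j
    unfolding is_arc_def fb_def using yB0[of j] that qB2[of j] yBpi[of j] qBpi[of j]
    by (intro exI[of _ "yB j"] exI[of _ "qB j - yB j"]) auto
  have inA: "cis (2*pi) \<in> fa i" if "i \<in> {1..n1}" for i
    unfolding fa_def arc_def using pA2[of i] that xA0[of i] by (intro CollectI exI[of _ "2*pi"]) auto
  have inB: "cis pi \<in> fb j" if "j \<in> {1..n2}" for j
    unfolding fb_def arc_def using yBpi[of j] that qBpi[of j] by (intro CollectI exI[of _ pi]) auto
  define ia where "ia u = inv_into {1..n1} \<alpha> u" for u
  define jb where "jb u = inv_into {1..n2} \<beta> u" for u
  have iaP: "ia u \<in> {1..n1}" "\<alpha> (ia u) = u" if "u \<in> A" for u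
    using that assms(3) unfolding ia_def bij_betw_def
    by (auto intro: inv_into_into f_inv_into_f)
  have jbP: "jb u \<in> {1..n2}" "\<beta> (jb u) = u" if "u \<in> B" for u
    using that assms(4) unfolding jb_def bij_betw_def
    by (auto intro: inv_into_into f_inv_into_f)
  define f where "f u = (if u \<in> A then fa (ia u) else fb (jb u))" for u
  have AB: "fa (ia u) \<inter> fb (jb v) \<noteq> {} \<longleftrightarrow> E u v" if "u \<in> A" "v \<in> B" for u v
    using meet[OF iaP(1)[OF that(1)] jbP(1)[OF that(2)]] iaP(2)[OF that(1)] jbP(2)[OF that(2)] by simp
  show ?thesis unfolding circular_arc_graph_def
  proof (intro exI[of _ f] conjI ballI impI)
    fix v assume "v \<in> V"
    thus "is_arc (f v)" unfolding f_def using VAB arcA iaP arcB jbP by auto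
  next
    fix u v assume u: "u \<in> V" and v: "v \<in> V" and uv: "u \<noteq> v"
    show "E u v \<longleftrightarrow> f u \<inter> f v \<noteq> {}"
    proof (cases "u \<in> A")
      case uA: True
      show ?thesis
      proof (cases "v \<in> A")
        case True
        have "E u v" using cA uA True uv unfolding clique_def by blast
        moreover have "cis (2*pi) \<in> f u \<inter> f v" unfolding f_def using uA True inA iaP by auto
        ultimately show ?thesis by blast
      next
        case False
        hence vB: "v \<in> B" using v VAB by auto
        show ?thesis unfolding f_def using uA False AB[OF uA vB] by auto
      qed
    next
      case uA: False
      hence uB: "u \<in> B" using u VAB by auto
      show ?thesis
      proof (cases "v \<in> A")
        case True
        have "E u v \<longleftrightarrow> E v u" using sym by blast
        thus ?thesis unfolding f_def using uA True AB[OF True uB] by (auto simp: Int_commute)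
      next
        case False
        hence vB: "v \<in> B" using v VAB by auto
        have "E u v" using cB uB vB uv unfolding clique_def by blast
        moreover have "cis pi \<in> f u \<inter> f v" unfolding f_def using uA False uB vB inB jbP by auto
        ultimately show ?thesis by blast
      qed
    qed
  qed
qed

end
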